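(* Let $(I,s,B,k)$ be an instance of Exact Bin Packing. Let $T$ be the tree with vertex set $\{r\}\cup\{v^i,v^i_1,\dots,v^i_{s(i)-1}: i\in I\}$ and edge set $\{\{v^i,v^i_j\}: i\in I,\,1\le j\le s(i)-1\}\cup\{\{r,v^i\}: i\in I\}$ (i.e., for each item a star with centre $v^i$ and $s(i)-1$ leaves, each centre joined to a root $r$). Then $(I,s,B,k)$ is a yes-instance of Exact Bin Packing if and only if the Collective Graph Exploration instance $(T,r,k,2B)$ is a yes-instance, i.e., there exist $k$ $r$-robot cycles in $T$, each of length at most $2B$, which together traverse every edge of $T$.
   Context: Exact Bin Packing: given a finite set $I$ of items, a positive size $s(i)\in\mathbb{N}$ for each $i\in I$, a positive integer $B$ and a positive integer $k$ with $\sum_{i\in I}s(i)=B\cdot k$, decide whether there is a partition of $I$ into disjoint sets $I_1,\dots,I_k$ with $\sum_{i\in I_j}s(i)=B$ for all $j$. A path in a graph is a sequence $(v_0,\dots,v_\ell)$ of vertices with consecutive vertices adjacent (repetitions allowed), of length $\ell$; a cycle is a path with $v_0=v_\ell$; an $r$-robot cycle is a cycle with $v_0=v_\ell=r$. The CGE instance $(G,v_{\mathsf{init}},k,B)$ is a yes-instance if there are $k$ $v_{\mathsf{init}}$-robot cycles, each of length at most $B$, such that every edge of $G$ is traversed by at least one of them. *)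

theory Defs
  imports Main
begin

definition ebp_yes :: "'a set \<Rightarrow> ('a \<Rightarrow> nat) \<Rightarrow> nat \<Rightarrow> nat \<Rightarrow> bool" where
  "ebp_yes I s B k \<longleftrightarrow>
     (\<exists>P :: nat \<Rightarrow> 'a set.
        (\<Union>j<k. P j) = I \<and>
        (\<forall>j<k. \<forall>j'<k. j \<noteq> j' \<longrightarrow> P j \<inter> P j' = {}) \<and>
        (\<forall>j<k. sum s (P j) = B))"

text \<open>Undirected graphs are given by their edge sets (edges are two-element vertex sets).
  A path is a nonempty list of vertices with consecutive vertices adjacent; its length is the
  number of steps.\<close>
definition is_path :: "'v set set \<Rightarrow> 'v list \<Rightarrow> bool" where
  "is_path E ps \<longleftrightarrow> ps \<noteq> [] \<and> (\<forall>t. Suc t < length ps \<longrightarrow> {ps ! t, ps ! Suc t} \<in> E)"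

definition path_len :: "'v list \<Rightarrow> nat" where
  "path_len ps = length ps - 1"

definition robot_cycle :: "'v set set \<Rightarrow> 'v \<Rightarrow> 'v list \<Rightarrow> bool" where
  "robot_cycle E r ps \<longleftrightarrow> is_path E ps \<and> hd ps = r \<and> last ps = r"

definition traverses :: "'v list \<Rightarrow> 'v set \<Rightarrow> bool" where
  "traverses ps e \<longleftrightarrow> (\<exists>t. Suc t < length ps \<and> {ps ! t, ps ! Suc t} = e)"

definition cge_yes :: "'v set set \<Rightarrow> 'v \<Rightarrow> nat \<Rightarrow> nat \<Rightarrow> bool" where
  "cge_yes E v0 k B \<longleftrightarrow>
     (\<exists>W :: nat \<Rightarrow> 'v list.
        (\<forall>j<k. robot_cycle E v0 (W j) \<and> path_len (W j) \<le> B) \<and>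
        (\<forall>e\<in>E. \<exists>j<k. traverses (W j) e))"

datatype 'a tvert = Root | Ctr 'a | Lf 'a nat

definition tree_edges :: "'a set \<Rightarrow> ('a \<Rightarrow> nat) \<Rightarrow> 'a tvert set set" where
  "tree_edges I s =
     {{Ctr i, Lf i j} | i j. i \<in> I \<and> 1 \<le> j \<and> j \<le> s i - 1}
     \<union> {{Root, Ctr i} | i. i \<in> I}"

end

theory Submission
  imports Defs
begin


lemma exists_cross:
  "P a \<Longrightarrow> \<not> P b \<Longrightarrow> a \<le> b \<Longrightarrow> \<exists>m. a \<le> m \<and> m < b \<and> P m \<and> \<not> P (Suc m)"
proof (induction b)
  case 0 then show ?case by auto
next
  case (Suc b)
  show ?case
  proof (cases "P b")
    case True
    then show ?thesis using Suc by (metis le_SucE lessI)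
  next
    case False
    then have "a \<le> b" using Suc by (metis le_SucE)
    then show ?thesis using Suc.IH Suc.prems False by (meson less_SucI)
  qed
qed

lemma card_fibers2:
  assumes "finite A"
    and "\<And>d. d \<in> f ` A \<Longrightarrow> \<exists>a b. a\<in>A \<and> b\<in>A \<and> a\<noteq>b \<and> f a = d \<and> f b = d"
  shows "2 * card (f ` A) \<le> card A"
proof -
  have A: "A = (\<Union>d\<in>f ` A. {a\<in>A. f a = d})" by auto
  have "card A = (\<Sum>d\<in>f ` A. card {a\<in>A. f a = d})"
    by (subst A, rule card_UN_disjoint) (use assms(1) in auto)
  moreover have "(\<Sum>d\<in>f ` A. card {a\<in>A. f a = d}) \<ge> (\<Sum>d\<in>f ` A. 2)"
  proof (rule sum_mono)
    fix d assume "d \<in> f ` A"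
    then obtain a b where ab: "a\<in>A" "b\<in>A" "a\<noteq>b" "f a = d" "f b = d" using assms(2) by blast
    have "card {a,b} \<le> card {a\<in>A. f a = d}"
      by (rule card_mono) (use assms(1) ab in auto)
    then show "2 \<le> card {a\<in>A. f a = d}" using ab by simp
  qed
  ultimately show ?thesis by simp
qed

lemma enter:
  assumes "is_path E ps" "hd ps = r" "r \<notin> S" "p < length ps" "ps!p \<in> S"
    and cr: "\<And>u v. {u,v} \<in> E \<Longrightarrow> u \<in> S \<Longrightarrow> v \<notin> S \<Longrightarrow> {u,v} = {x,y}"
  shows "\<exists>t. t < p \<and> Suc t < length ps \<and> {ps!t, ps!Suc t} = {x,y}"
proof -
  have ne: "ps \<noteq> []" using assms(1) by (simp add: is_path_def)
  have "ps!0 = r" using ne assms(2) by (simp add: hd_conv_nth)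
  then obtain m where m: "0 \<le> m" "m < p" "ps!m \<notin> S" "\<not> ps!Suc m \<notin> S"
    using exists_cross[of "\<lambda>m. ps!m \<notin> S" 0 p] assms by auto
  have "{ps!m, ps!Suc m} \<in> E" using assms(1,4) m by (simp add: is_path_def)
  then have "{ps!Suc m, ps!m} \<in> E" by (simp add: insert_commute)
  then have "{ps!Suc m, ps!m} = {x,y}" using cr m by blast
  then show ?thesis using m assms(4) by (auto simp: insert_commute)
qed

lemma twice:
  assumes "is_path E ps" "hd ps = r" "last ps = r" "r \<notin> S" "x \<in> S" "y \<notin> S"
    and cr: "\<And>u v. {u,v} \<in> E \<Longrightarrow> u \<in> S \<Longrightarrow> v \<notin> S \<Longrightarrow> {u,v} = {x,y}"
    and t: "Suc t < length ps" "{ps!t, ps!Suc t} = {x,y}"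
  shows "\<exists>t'. t' \<noteq> t \<and> Suc t' < length ps \<and> {ps!t', ps!Suc t'} = {x,y}"
proof -
  have ne: "ps \<noteq> []" using assms(1) by (simp add: is_path_def)
  have xy: "x \<noteq> y" using assms by auto
  from t(2) xy have "(ps!t = x \<and> ps!Suc t = y) \<or> (ps!t = y \<and> ps!Suc t = x)"
    by (auto simp: doubleton_eq_iff)
  then show ?thesis
  proof
    assume h: "ps!t = x \<and> ps!Suc t = y"
    from enter[OF assms(1,2,4), of t x y] h assms(5) cr t(1)
    show ?thesis by force
  next
    assume h: "ps!t = y \<and> ps!Suc t = x"
    let ?n = "length ps - 1"
    have "ps!?n = r" using ne assms(3) by (simp add: last_conv_nth)
    moreover have "Suc t \<le> ?n" using t(1) by simp
    ultimately obtain m where m: "Suc t \<le> m" "m < ?n" "ps!m \<in> S" "ps!Suc m \<notin> S"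
      using exists_cross[of "\<lambda>m. ps!m \<in> S" "Suc t" ?n] h assms(4,5) by auto
    have "{ps!m, ps!Suc m} \<in> E" using assms(1) m by (simp add: is_path_def)
    then have "{ps!m, ps!Suc m} = {x,y}" using cr m by simp
    then show ?thesis using m by (intro exI[of _ m]) auto
  qed
qed



definition Ei :: "('a \<Rightarrow> nat) \<Rightarrow> 'a \<Rightarrow> 'a tvert set set" where
  "Ei s i = insert {Root, Ctr i} ((\<lambda>j. {Ctr i, Lf i j}) ` {1..<s i})"

lemma tree_edges_UN: "tree_edges I s = (\<Union>i\<in>I. Ei s i)"
  unfolding tree_edges_def Ei_def by fastforce

lemma Ei_card: "s i > 0 \<Longrightarrow> card (Ei s i) = s i"
proof -
  assume "s i > 0"
  have inj: "inj_on (\<lambda>j. {Ctr i, Lf i j}) {1..<s i}"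
    by (auto simp: inj_on_def doubleton_eq_iff)
  have "{Root, Ctr i} \<notin> (\<lambda>j. {Ctr i, Lf i j}) ` {1..<s i}"
    by (auto simp: doubleton_eq_iff)
  then have "card (Ei s i) = Suc (card ((\<lambda>j. {Ctr i, Lf i j}) ` {1..<s i}))"
    unfolding Ei_def by simp
  also have "\<dots> = s i" using inj \<open>s i > 0\<close> by (simp add: card_image)
  finally show ?thesis .
qed

lemma Ei_disj: "i \<noteq> i' \<Longrightarrow> Ei s i \<inter> Ei s i' = {}"
  unfolding Ei_def by (auto simp: doubleton_eq_iff)

lemma Ei_fin: "finite (Ei s i)"
  unfolding Ei_def by simp

lemma root_side:
  assumes "{u,v} \<in> tree_edges I s" "u \<in> insert (Ctr i) (range (Lf i))"
    "v \<notin> insert (Ctr i) (range (Lf i))"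
  shows "{u,v} = {Ctr i, Root}"
  using assms unfolding tree_edges_def by (auto simp: doubleton_eq_iff)

lemma leaf_side:
  assumes "{u,v} \<in> tree_edges I s" "u \<in> {Lf i j}" "v \<notin> {Lf i j}"
  shows "{u,v} = {Lf i j, Ctr i}"
  using assms unfolding tree_edges_def by (auto simp: doubleton_eq_iff)

lemma tree_sides:
  assumes "e \<in> tree_edges I s"
  shows "\<exists>x y S. e = {x,y} \<and> Root \<notin> S \<and> x\<in>S \<and> y\<notin>S \<and>
     (\<forall>u v. {u,v}\<in>tree_edges I s \<longrightarrow> u\<in>S \<longrightarrow> v\<notin>S \<longrightarrow> {u,v} = {x,y})"
proof -
  from assms consider (l) i j where "e = {Ctr i, Lf i j}" | (r) i where "e = {Root, Ctr i}"
    unfolding tree_edges_def by blast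
  then show ?thesis
  proof cases
    case l
    show ?thesis
      apply (rule exI[of _ "Lf i j"], rule exI[of _ "Ctr i"], rule exI[of _ "{Lf i j}"])
      using l leaf_side[of _ _ I s i j] by (auto simp: insert_commute)
  next
    case r
    show ?thesis
      apply (rule exI[of _ "Ctr i"], rule exI[of _ "Root"],
             rule exI[of _ "insert (Ctr i) (range (Lf i))"])
      using r root_side[of _ _ I s i] by (auto simp: insert_commute)
  qed
qed

lemma walk_card:
  assumes rc: "robot_cycle E r ps" and len: "path_len ps \<le> 2*B"
    and side: "\<forall>e\<in>E. \<exists>x y S. e = {x,y} \<and> r\<notin>S \<and> x\<in>S \<and> y\<notin>S \<and>
       (\<forall>u v. {u,v}\<in>E \<longrightarrow> u\<in>S \<longrightarrow> v\<notin>S \<longrightarrow> {u,v} = {x,y})"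
  shows "{e. traverses ps e} \<subseteq> E" "finite {e. traverses ps e}" "card {e. traverses ps e} \<le> B"
proof -
  have p: "is_path E ps" "hd ps = r" "last ps = r" using rc by (auto simp: robot_cycle_def)
  define f where "f t = {ps!t, ps!Suc t}" for t
  have D: "{e. traverses ps e} = f ` {..<length ps - 1}"
    unfolding traverses_def f_def by (auto simp: less_diff_conv)
  show sub: "{e. traverses ps e} \<subseteq> E" using p(1) unfolding traverses_def is_path_def by auto
  show "finite {e. traverses ps e}" using D by simp
  have "2 * card (f ` {..<length ps - 1}) \<le> card {..<length ps - 1}"
  proof (rule card_fibers2)
    fix d assume d: "d \<in> f ` {..<length ps - 1}"
    then obtain t where t: "t < length ps - 1" "f t = d" by auto
    then have "d \<in> E" using D sub by auto
    then obtain x y S where xyS: "d = {x,y}" "r\<notin>S" "x\<in>S" "y\<notin>S"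
      "\<And>u v. {u,v}\<in>E \<Longrightarrow> u\<in>S \<Longrightarrow> v\<notin>S \<Longrightarrow> {u,v} = {x,y}" using side by metis
    have "Suc t < length ps" using t(1) by simp
    then obtain t' where "t' \<noteq> t" "Suc t' < length ps" "{ps!t', ps!Suc t'} = {x,y}"
      using twice[OF p(1-3) xyS(2-5), of t] t xyS(1) unfolding f_def by blast
    then show "\<exists>a b. a \<in> {..<length ps - 1} \<and> b \<in> {..<length ps - 1} \<and> a \<noteq> b \<and> f a = d \<and> f b = d"
      using t xyS(1) unfolding f_def by (intro exI[of _ t] exI[of _ t']) auto
  qed simp
  then show "card {e. traverses ps e} \<le> B" using D len by (simp add: path_len_def)
qed

lemma leaf_root:
  assumes rc: "robot_cycle (tree_edges I s) Root ps" and e: "e \<in> Ei s i" "traverses ps e"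
  shows "traverses ps {Root, Ctr i}"
proof -
  let ?S = "insert (Ctr i) (range (Lf i))"
  have p: "is_path (tree_edges I s) ps" "hd ps = Root" using rc by (auto simp: robot_cycle_def)
  obtain t where t: "Suc t < length ps" "{ps!t, ps!Suc t} = e" using e(2) by (auto simp: traverses_def)
  show ?thesis
  proof (cases "e = {Root, Ctr i}")
    case True then show ?thesis using e by simp
  next
    case False
  have "ps!t \<in> ?S" using t(2) e(1) False unfolding Ei_def by (auto simp: doubleton_eq_iff)
  then obtain t' where "Suc t' < length ps" "{ps!t', ps!Suc t'} = {Ctr i, Root}"
    using enter[OF p, of ?S t "Ctr i" Root] root_side[of _ _ I s i] t(1) by auto
  then show ?thesis by (auto simp: traverses_def insert_commute)
  qed
qed



lemma cge_to_ebp: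
  assumes fin: "finite I" and pos: "\<forall>i\<in>I. s i > 0" and sm: "sum s I = B * k"
    and cge: "cge_yes (tree_edges I s) Root k (2 * B)"
  shows "ebp_yes I s B k"
proof -
  let ?E = "tree_edges I s"
  obtain W where W: "\<forall>j<k. robot_cycle ?E Root (W j) \<and> path_len (W j) \<le> 2*B"
    "\<forall>e\<in>?E. \<exists>j<k. traverses (W j) e" using cge unfolding cge_yes_def by blast
  define D where "D j = {e. traverses (W j) e}" for j
  have side: "\<forall>e\<in>?E. \<exists>x y S. e = {x,y} \<and> Root\<notin>S \<and> x\<in>S \<and> y\<notin>S \<and>
       (\<forall>u v. {u,v}\<in>?E \<longrightarrow> u\<in>S \<longrightarrow> v\<notin>S \<longrightarrow> {u,v} = {x,y})"
    using tree_sides by blast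
  have Dsub: "D j \<subseteq> ?E" and Dfin: "finite (D j)" and Dle: "card (D j) \<le> B" if "j < k" for j
    using walk_card[OF _ _ side, of "W j" B] W(1) that unfolding D_def by auto
  have Efin: "finite ?E" using fin by (simp add: tree_edges_UN Ei_fin)
  have cardE: "card ?E = B * k"
    unfolding tree_edges_UN
  proof (subst card_UN_disjoint)
    show "(\<Sum>i\<in>I. card (Ei s i)) = B * k" using pos sm by (simp add: Ei_card)
  qed (simp_all add: fin Ei_fin Ei_disj)
  have EU: "?E = (\<Union>j<k. D j)" using Dsub W(2) unfolding D_def by blast
  have sumle: "(\<Sum>j<k. card (D j)) \<le> B * k"
  proof -
    have "(\<Sum>j<k. card (D j)) \<le> (\<Sum>j<k. B)" by (rule sum_mono) (simp add: Dle)
    then show ?thesis by (simp add: mult.commute)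
  qed
  have sumge: "B * k \<le> (\<Sum>j<k. card (D j))"
    using cardE EU card_UN_le[of "{..<k}" D] by simp
  have eachB: "card (D j) = B" if "j < k" for j
  proof (rule ccontr)
    assume "card (D j) \<noteq> B"
    then have "card (D j) < B" using Dle that by force
    then have "(\<Sum>j<k. card (D j)) < (\<Sum>j<k. B)"
      using that by (intro sum_strict_mono_ex1) (auto simp: Dle)
    then show False using sumge by (simp add: mult.commute)
  qed
  have disj: "D a \<inter> D b = {}" if ab: "a < k" "b < k" "a \<noteq> b" for a b
  proof (rule ccontr)
    assume ne: "D a \<inter> D b \<noteq> {}"
    let ?R = "{..<k} - {a,b}"
    have fR: "finite ?R" by simp
    have U: "(\<Union>j<k. D j) = (D a \<union> D b) \<union> (\<Union>j\<in>?R. D j)" using ab by blast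
    have c1: "card ?E \<le> card (D a \<union> D b) + card (\<Union>j\<in>?R. D j)"
      unfolding EU U by (rule card_Un_le)
    have c2: "card (\<Union>j\<in>?R. D j) \<le> (\<Sum>j\<in>?R. card (D j))" by (rule card_UN_le) simp
    have c3: "card (D a \<union> D b) < card (D a) + card (D b)"
    proof -
      have "card (D a \<inter> D b) > 0" using ne Dfin ab by (simp add: card_gt_0_iff)
      then show ?thesis using card_Un_Int[of "D a" "D b"] Dfin ab by simp
    qed
    have c4: "(\<Sum>j<k. card (D j)) = card (D a) + (card (D b) + (\<Sum>j\<in>?R. card (D j)))"
    proof -
      have "(\<Sum>j<k. card (D j)) = card (D a) + (\<Sum>j\<in>{..<k}-{a}. card (D j))"
        using ab by (simp add: sum.remove)
      also have "(\<Sum>j\<in>{..<k}-{a}. card (D j)) = card (D b) + (\<Sum>j\<in>{..<k}-{a}-{b}. card (D j))"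
        using ab by (subst sum.remove[of _ b]) auto
      also have "{..<k}-{a}-{b} = ?R" by blast
      finally show ?thesis .
    qed
    have "card ?E < (\<Sum>j<k. card (D j))" using c1 c2 c3 c4 by linarith
    then show False using cardE sumle by simp
  qed
  define P where "P j = {i\<in>I. {Root, Ctr i} \<in> D j}" for j
  have ErE: "{Root, Ctr i} \<in> ?E" if "i \<in> I" for i
    using that unfolding tree_edges_UN Ei_def by blast
  have EiE: "Ei s i \<subseteq> ?E" if "i \<in> I" for i using that unfolding tree_edges_UN by blast
  have G3: "{Root, Ctr i} \<in> D j" if "j < k" "e \<in> Ei s i" "e \<in> D j" for j e i
    using leaf_root[of I s "W j" e i] W(1) that unfolding D_def by auto
  have DP: "D j = (\<Union>i\<in>P j. Ei s i)" if j: "j < k" for j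
  proof
    show "D j \<subseteq> (\<Union>i\<in>P j. Ei s i)"
    proof
      fix e assume e: "e \<in> D j"
      have "e \<in> (\<Union>i\<in>I. Ei s i)" using Dsub[OF j] e unfolding tree_edges_UN by blast
      then obtain i where "i \<in> I" "e \<in> Ei s i" by blast
      then show "e \<in> (\<Union>i\<in>P j. Ei s i)" using G3 j e unfolding P_def by blast
    qed
  next
    show "(\<Union>i\<in>P j. Ei s i) \<subseteq> D j"
    proof
      fix e assume "e \<in> (\<Union>i\<in>P j. Ei s i)"
      then obtain i where i: "i \<in> I" "{Root, Ctr i} \<in> D j" "e \<in> Ei s i" unfolding P_def by auto
      then obtain j' where j': "j' < k" "e \<in> D j'" using EiE EU by blast
      then have "{Root, Ctr i} \<in> D j'" using G3 i by blast
      then have "j' = j" using disj[of j j'] i j j' by blast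
      then show "e \<in> D j" using j' by simp
    qed
  qed
  show ?thesis unfolding ebp_yes_def
  proof (intro exI[of _ P] conjI allI impI)
    show "(\<Union>j<k. P j) = I"
    proof
      show "(\<Union>j<k. P j) \<subseteq> I" unfolding P_def by auto
      show "I \<subseteq> (\<Union>j<k. P j)" using ErE EU unfolding P_def by blast
    qed
  next
    fix j j' assume "j < k" "j' < k" "j \<noteq> j'"
    then show "P j \<inter> P j' = {}" using disj[of j j'] unfolding P_def by blast
  next
    fix j assume j: "j < k"
    have fP: "finite (P j)" using fin unfolding P_def by simp
    have "card (D j) = (\<Sum>i\<in>P j. card (Ei s i))"
      unfolding DP[OF j] by (rule card_UN_disjoint) (simp_all add: fP Ei_fin Ei_disj)
    also have "\<dots> = sum s (P j)" using pos unfolding P_def by (intro sum.cong) (auto simp: Ei_card)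
    finally show "sum s (P j) = B" using eachB j by simp
  qed
qed



lemma is_path_Cons: "is_path E (x#y#zs) \<longleftrightarrow> {x,y}\<in>E \<and> is_path E (y#zs)"
proof
  assume h: "is_path E (x#y#zs)"
  have "{x,y} \<in> E" using h[unfolded is_path_def, THEN conjunct2, rule_format, of 0] by simp
  moreover have "is_path E (y#zs)" unfolding is_path_def
  proof (intro conjI allI impI)
    fix t assume "Suc t < length (y#zs)"
    then show "{(y#zs)!t, (y#zs)!Suc t} \<in> E" using h[unfolded is_path_def, THEN conjunct2, rule_format, of "Suc t"] by simp
  qed simp
  ultimately show "{x,y}\<in>E \<and> is_path E (y#zs)" by blast
next
  assume h: "{x,y}\<in>E \<and> is_path E (y#zs)"
  show "is_path E (x#y#zs)" unfolding is_path_def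
  proof (intro conjI allI impI)
    fix t assume t: "Suc t < length (x#y#zs)"
    show "{(x#y#zs)!t, (x#y#zs)!Suc t} \<in> E"
    proof (cases t)
      case 0 then show ?thesis using h by simp
    next
      case (Suc t') then show ?thesis using h t unfolding is_path_def by auto
    qed
  qed simp
qed

lemma is_path_single: "is_path E [x]"
  by (simp add: is_path_def)

lemma is_path_glue: "is_path E (ys @ [z]) \<Longrightarrow> is_path E (z # zs) \<Longrightarrow> is_path E (ys @ z # zs)"
proof (induction ys)
  case Nil then show ?case by simp
next
  case (Cons a ys)
  show ?case
  proof (cases ys)
    case Nil then show ?thesis using Cons.prems by (simp add: is_path_Cons)
  next
    case (Cons b ys')
    then show ?thesis using Cons.prems Cons.IH by (simp add: is_path_Cons)
  qed
qed

lemma trav_app1: "traverses xs e \<Longrightarrow> traverses (xs @ ys) e"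
  unfolding traverses_def
proof -
  assume "\<exists>t. Suc t < length xs \<and> {xs ! t, xs ! Suc t} = e"
  then obtain t where t: "Suc t < length xs" "{xs ! t, xs ! Suc t} = e" by blast
  show "\<exists>t. Suc t < length (xs @ ys) \<and> {(xs @ ys) ! t, (xs @ ys) ! Suc t} = e"
    by (rule exI[of _ t]) (use t in \<open>auto simp: nth_append\<close>)
qed

lemma trav_app2: "traverses ys e \<Longrightarrow> traverses (xs @ ys) e"
  unfolding traverses_def
proof -
  assume "\<exists>t. Suc t < length ys \<and> {ys ! t, ys ! Suc t} = e"
  then obtain t where t: "Suc t < length ys" "{ys ! t, ys ! Suc t} = e" by blast
  show "\<exists>t. Suc t < length (xs @ ys) \<and> {(xs @ ys) ! t, (xs @ ys) ! Suc t} = e"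
    by (rule exI[of _ "length xs + t"]) (use t in \<open>auto simp: nth_append\<close>)
qed

lemma trav_pair: "traverses [a,b] {a,b}"
  unfolding traverses_def by (rule exI[of _ 0]) simp

definition seg :: "('a \<Rightarrow> nat) \<Rightarrow> 'a \<Rightarrow> 'a tvert list" where
  "seg s i = Root # Ctr i # concat (map (\<lambda>j. [Lf i j, Ctr i]) [1..<s i])"

definition walk :: "('a \<Rightarrow> nat) \<Rightarrow> 'a list \<Rightarrow> 'a tvert list" where
  "walk s xs = concat (map (seg s) xs) @ [Root]"

lemma star_path:
  assumes "i \<in> I" "set js \<subseteq> {1..<s i}"
  shows "is_path (tree_edges I s) (Ctr i # concat (map (\<lambda>j. [Lf i j, Ctr i]) js) @ [Root])"
  using assms(2)
proof (induction js)
  case Nil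
  have "{Ctr i, Root} \<in> tree_edges I s" using assms(1) unfolding tree_edges_def by (auto simp: insert_commute)
  then show ?case by (simp add: is_path_Cons is_path_single)
next
  case (Cons j js)
  have "{Ctr i, Lf i j} \<in> tree_edges I s" using assms(1) Cons.prems unfolding tree_edges_def by force
  then show ?case using Cons by (simp add: is_path_Cons insert_commute)
qed

lemma seg_path:
  assumes "i \<in> I"
  shows "is_path (tree_edges I s) (seg s i @ [Root])"
proof -
  have "{Root, Ctr i} \<in> tree_edges I s" using assms unfolding tree_edges_def by auto
  then show ?thesis using star_path[OF assms, of "[1..<s i]"] unfolding seg_def
    by (simp add: is_path_Cons)
qed

lemma walk_Root: "\<exists>zs. walk s xs = Root # zs"
  by (cases xs) (auto simp: walk_def seg_def)

lemma walk_path: "set xs \<subseteq> I \<Longrightarrow> is_path (tree_edges I s) (walk s xs)"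
proof (induction xs)
  case Nil then show ?case by (simp add: walk_def is_path_single)
next
  case (Cons i xs)
  obtain zs where zs: "walk s xs = Root # zs" using walk_Root by blast
  have "walk s (i # xs) = seg s i @ walk s xs" by (simp add: walk_def)
  then show ?case using is_path_glue[OF seg_path[of i I s], of zs] Cons zs by simp
qed

lemma seg_len: "s i > 0 \<Longrightarrow> length (seg s i) = 2 * s i"
proof -
  assume "s i > 0"
  have "length (concat (map (\<lambda>j. [Lf i j, Ctr i]) js)) = 2 * length js" for js :: "nat list"
    by (induction js) auto
  then show ?thesis using \<open>s i > 0\<close> unfolding seg_def by simp
qed

lemma walk_len: "\<forall>i\<in>set xs. s i > 0 \<Longrightarrow> length (walk s xs) = sum_list (map (\<lambda>i. 2 * s i) xs) + 1"
  by (induction xs) (auto simp: walk_def seg_len)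

lemma walk_trav:
  assumes "i \<in> set xs" "traverses (seg s i @ [Root]) e"
  shows "traverses (walk s xs) e"
proof -
  obtain as bs where xs: "xs = as @ i # bs" using assms(1) by (meson split_list)
  obtain zs where zs: "walk s bs = Root # zs" using walk_Root by blast
  have "walk s xs = concat (map (seg s) as) @ ((seg s i @ [Root]) @ zs)"
    using zs unfolding xs by (simp add: walk_def)
  then show ?thesis using assms(2) trav_app1 trav_app2 by metis
qed

lemma seg_trav_root: "traverses (seg s i @ [Root]) {Root, Ctr i}"
proof -
  have "seg s i @ [Root] = [Root, Ctr i] @ (concat (map (\<lambda>j. [Lf i j, Ctr i]) [1..<s i]) @ [Root])"
    by (simp add: seg_def)
  then show ?thesis using trav_app1 trav_pair by metis
qed

lemma seg_trav_leaf:
  assumes "j \<in> {1..<s i}"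
  shows "traverses (seg s i @ [Root]) {Ctr i, Lf i j}"
proof -
  have "j \<in> set [1..<s i]" using assms by simp
  then obtain as bs where ab: "[1..<s i] = as @ j # bs" by (meson split_list)
  have "seg s i @ [Root] = ([Root, Ctr i] @ concat (map (\<lambda>j. [Lf i j, Ctr i]) as)) @
       ([Lf i j, Ctr i] @ (concat (map (\<lambda>j. [Lf i j, Ctr i]) bs) @ [Root]))"
    unfolding seg_def ab by simp
  moreover have "{Ctr i, Lf i j} = {Lf i j, Ctr i}" by (simp add: insert_commute)
  ultimately show ?thesis using trav_app1 trav_app2 trav_pair by metis
qed

lemma ebp_to_cge:
  assumes fin: "finite I" and pos: "\<forall>i\<in>I. s i > 0"
    and ebp: "ebp_yes I s B k"
  shows "cge_yes (tree_edges I s) Root k (2 * B)"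
proof -
  obtain P where P: "(\<Union>j<k. P j) = I" "\<forall>j<k. sum s (P j) = B"
    using ebp unfolding ebp_yes_def by blast
  define xs where "xs j = (SOME xs. set xs = P j \<and> distinct xs)" for j
  have xs: "set (xs j) = P j \<and> distinct (xs j)" if "j < k" for j
  proof -
    have "finite (P j)" using P(1) fin that by (meson UN_upper finite_subset lessThan_iff)
    then show ?thesis unfolding xs_def by (rule someI_ex[OF finite_distinct_list])
  qed
  have PI: "P j \<subseteq> I" if "j < k" for j using P(1) that by blast
  show ?thesis unfolding cge_yes_def
  proof (intro exI[of _ "\<lambda>j. walk s (xs j)"] conjI ballI allI impI)
    fix j assume j: "j < k"
    show "robot_cycle (tree_edges I s) Root (walk s (xs j))"
      unfolding robot_cycle_def using walk_path[of "xs j" I s] xs[OF j] PI[OF j] walk_Root[of s "xs j"]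
      by (auto simp: walk_def)
    have pj: "\<forall>i\<in>set (xs j). 0 < s i" using PI[OF j] pos xs[OF j] by blast
    have "path_len (walk s (xs j)) = sum_list (map (\<lambda>i. 2 * s i) (xs j))"
      using walk_len[OF pj] by (simp add: path_len_def)
    also have "\<dots> = (\<Sum>i\<in>P j. 2 * s i)" using xs[OF j] by (metis sum_list_distinct_conv_sum_set)
    also have "\<dots> = 2 * B" using P(2) j by (simp add: sum_distrib_left[symmetric])
    finally show "path_len (walk s (xs j)) \<le> 2 * B" by simp
  next
    fix e assume "e \<in> tree_edges I s"
    then obtain i where i: "i \<in> I" "e \<in> Ei s i" unfolding tree_edges_UN by blast
    then obtain j where j: "j < k" "i \<in> P j" using P(1) by blast
    have "traverses (seg s i @ [Root]) e"
      using i(2) seg_trav_root[of s i] seg_trav_leaf[of _ s i] unfolding Ei_def by blast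
    then show "\<exists>j<k. traverses (walk s (xs j)) e"
      using walk_trav[of i "xs j" s e] xs[OF j(1)] j by blast
  qed
qed


theorem mainTheorem12:
  fixes I :: "'a set" and s :: "'a \<Rightarrow> nat" and B k :: nat
  assumes "finite I"
    and "\<forall>i\<in>I. s i > 0"
    and "B > 0" and "k > 0"
    and "sum s I = B * k"
  shows "ebp_yes I s B k \<longleftrightarrow> cge_yes (tree_edges I s) Root k (2 * B)"
  using ebp_to_cge[OF assms(1,2)] cge_to_ebp[OF assms(1,2,5)] by blast

end
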